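(* Let $G$ be a finite perfect graph. For $v\in V(G)$ let $c(v)$ be the largest size of a clique of $G$ containing $v$, and let $i(v)$ be the largest size of an independent set of $G$ containing $v$. Then \[ \sum_{v\in V(G)}\frac{1}{c(v)\,i(v)}\le 1. \]
   Context: A graph $G$ is perfect if for every induced subgraph its chromatic number equals its clique number. *)

theory Defs
  imports Complex_Main
begin

text \<open>A finite simple graph is given by a finite vertex set V and a symmetric,
irreflexive adjacency relation E (only its restriction to V matters).\<close>

definition simple_graph :: "'a set \<Rightarrow> ('a \<Rightarrow> 'a \<Rightarrow> bool) \<Rightarrow> bool" where
  "simple_graph V E \<longleftrightarrow> (\<forall>x\<in>V. \<forall>y\<in>V. E x y \<longrightarrow> E y x) \<and> (\<forall>x\<in>V. \<not> E x x)"

definition is_clique :: "('a \<Rightarrow> 'a \<Rightarrow> bool) \<Rightarrow> 'a set \<Rightarrow> bool" where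
  "is_clique E K \<longleftrightarrow> (\<forall>x\<in>K. \<forall>y\<in>K. x \<noteq> y \<longrightarrow> E x y)"

definition is_indep :: "('a \<Rightarrow> 'a \<Rightarrow> bool) \<Rightarrow> 'a set \<Rightarrow> bool" where
  "is_indep E I \<longleftrightarrow> (\<forall>x\<in>I. \<forall>y\<in>I. \<not> E x y)"

definition clique_number :: "'a set \<Rightarrow> ('a \<Rightarrow> 'a \<Rightarrow> bool) \<Rightarrow> nat" where
  "clique_number S E = Max {card K | K. K \<subseteq> S \<and> is_clique E K}"

definition proper_colouring :: "'a set \<Rightarrow> ('a \<Rightarrow> 'a \<Rightarrow> bool) \<Rightarrow> ('a \<Rightarrow> nat) \<Rightarrow> nat \<Rightarrow> bool" where
  "proper_colouring S E f k \<longleftrightarrow> (\<forall>x\<in>S. f x < k) \<and> (\<forall>x\<in>S. \<forall>y\<in>S. E x y \<longrightarrow> f x \<noteq> f y)"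

definition chromatic_number :: "'a set \<Rightarrow> ('a \<Rightarrow> 'a \<Rightarrow> bool) \<Rightarrow> nat" where
  "chromatic_number S E = (LEAST k. \<exists>f. proper_colouring S E f k)"

definition perfect_graph :: "'a set \<Rightarrow> ('a \<Rightarrow> 'a \<Rightarrow> bool) \<Rightarrow> bool" where
  "perfect_graph V E \<longleftrightarrow>
     (\<forall>S. S \<subseteq> V \<longrightarrow> chromatic_number S E = clique_number S E)"

definition max_clique_at :: "'a set \<Rightarrow> ('a \<Rightarrow> 'a \<Rightarrow> bool) \<Rightarrow> 'a \<Rightarrow> nat" where
  "max_clique_at V E v = Max {card K | K. K \<subseteq> V \<and> is_clique E K \<and> v \<in> K}"

definition max_indep_at :: "'a set \<Rightarrow> ('a \<Rightarrow> 'a \<Rightarrow> bool) \<Rightarrow> 'a \<Rightarrow> nat" where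
  "max_indep_at V E v = Max {card I | I. I \<subseteq> V \<and> is_indep E I \<and> v \<in> I}"

end

theory Submission
  imports Defs
begin

lemma colouring_exists:
  assumes "finite S" "\<forall>a\<in>S. \<not> R a a"
  shows "\<exists>f. proper_colouring S R f (card S)"
proof -
  obtain f and n :: nat where f: "f ` S = {i. i < n}" "inj_on f S" using finite_imp_inj_to_nat_seg[OF assms(1)] by blast
  have "card (f ` S) = card S" using f(2) by (rule card_image)
  then have n: "n = card S" using f(1) by simp
  have "proper_colouring S R f (card S)"
    unfolding proper_colouring_def
  proof safe
    fix x assume "x \<in> S"
    then have "f x \<in> f ` S" by (rule imageI)
    then show "f x < card S" unfolding f(1) n by simp
  next
    fix x y assume "x \<in> S" "y \<in> S" "R x y" "f x = f y"
    have "x = y" using inj_onD[OF f(2) \<open>f x = f y\<close> \<open>x \<in> S\<close> \<open>y \<in> S\<close>] .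
    then show False using assms(2) \<open>x \<in> S\<close> \<open>R x y\<close> by simp
  qed
  then show ?thesis by blast
qed

lemma chi_colouring':
  assumes "finite S" "\<forall>a\<in>S. \<not> R a a"
  shows "\<exists>f. proper_colouring S R f (chromatic_number S R)"
  using colouring_exists[of S R, OF assms] unfolding chromatic_number_def by (rule LeastI)

lemma chi_le:
  "proper_colouring S R f k \<Longrightarrow> chromatic_number S R \<le> k"
  unfolding chromatic_number_def by (rule Least_le) blast

lemma colouring_mono:
  "proper_colouring S R f k \<Longrightarrow> k \<le> k' \<Longrightarrow> proper_colouring S R f k'"
  unfolding proper_colouring_def by auto

lemma colouring_subset:
  "proper_colouring S R f k \<Longrightarrow> T \<subseteq> S \<Longrightarrow> proper_colouring T R f k"
  unfolding proper_colouring_def by auto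

lemma clique_set_finite:
  assumes "finite S"
  shows "finite {card K | K. K \<subseteq> S \<and> is_clique R K}"
proof -
  have "{card K | K. K \<subseteq> S \<and> is_clique R K} \<subseteq> card ` Pow S" by auto
  then show ?thesis using assms finite_subset by blast
qed

lemma clique_le:
  assumes "finite S" "K \<subseteq> S" "is_clique R K"
  shows "card K \<le> clique_number S R"
  unfolding clique_number_def
  using clique_set_finite[OF assms(1), of R] assms by (intro Max_ge) auto

lemma clique_max:
  assumes "finite S"
  shows "\<exists>K. K \<subseteq> S \<and> is_clique R K \<and> card K = clique_number S R"
proof -
  have ne: "{card K | K. K \<subseteq> S \<and> is_clique R K} \<noteq> {}"
  proof -
    have "0 \<in> {card K | K. K \<subseteq> S \<and> is_clique R K}"
      by (auto simp: is_clique_def intro!: exI[of _ "{}"])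
    then show ?thesis by blast
  qed
  show ?thesis
    using Max_in[OF clique_set_finite[OF assms(1), of R] ne] unfolding clique_number_def by auto
qed

lemma clique_number_mono:
  assumes "finite S" "T \<subseteq> S"
  shows "clique_number T R \<le> clique_number S R"
proof -
  obtain K where "K \<subseteq> T" "is_clique R K" "card K = clique_number T R"
    using clique_max[of T R] assms finite_subset by blast
  then show ?thesis using clique_le[OF assms(1), of K R] assms(2) by auto
qed

lemma clique_colour_inj:
  assumes "proper_colouring S R f k" "K \<subseteq> S" "is_clique R K"
  shows "inj_on f K"
  using assms unfolding proper_colouring_def is_clique_def inj_on_def by blast

lemma clique_le_colours:
  assumes "proper_colouring S R f k" "K \<subseteq> S" "is_clique R K"
  shows "card K \<le> k"
proof -
  have "f ` K \<subseteq> {..<k}" using assms(1,2) unfolding proper_colouring_def by auto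
  then have "card (f ` K) \<le> card {..<k}" by (intro card_mono) auto
  then have "card (f ` K) \<le> k" by simp
  moreover have "card (f ` K) = card K" using clique_colour_inj[OF assms] by (rule card_image)
  ultimately show ?thesis by simp
qed

lemma clique_all_colours:
  assumes "proper_colouring S R f k" "K \<subseteq> S" "is_clique R K" "card K = k" "finite K"
  shows "f ` K = {..<k}"
proof -
  have "f ` K \<subseteq> {..<k}" using assms(1,2) unfolding proper_colouring_def by auto
  moreover have "card (f ` K) = card K" using clique_colour_inj[OF assms(1-3)] by (rule card_image)
  ultimately show ?thesis using assms(4) by (intro card_subset_eq) auto
qed

lemma omega_le_chi:
  assumes "finite S" "\<forall>a\<in>S. \<not> R a a"
  shows "clique_number S R \<le> chromatic_number S R"
proof -
  obtain f where f: "proper_colouring S R f (chromatic_number S R)" using chi_colouring'[of S R, OF assms] by blast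
  obtain K where "K \<subseteq> S" "is_clique R K" "card K = clique_number S R" using clique_max[OF assms(1)] by blast
  then show ?thesis using clique_le_colours[OF f, of K] by simp
qed


lemma pc_edge: "proper_colouring S R f k \<Longrightarrow> a \<in> S \<Longrightarrow> b \<in> S \<Longrightarrow> R a b \<Longrightarrow> f a \<noteq> f b"
  unfolding proper_colouring_def by blast

lemma pc_lt: "proper_colouring S R f k \<Longrightarrow> a \<in> S \<Longrightarrow> f a < k"
  unfolding proper_colouring_def by blast

lemma replication:
  assumes fin: "finite S" and sym: "\<forall>a\<in>S. \<forall>b\<in>S. R a b \<longrightarrow> R b a" and irr: "\<forall>a\<in>S. \<not> R a a"
  and x: "x \<in> S" and x': "x' \<in> S" and xx: "x \<noteq> x'" "R x x'"
  and twin: "\<forall>z\<in>S. z \<noteq> x \<longrightarrow> z \<noteq> x' \<longrightarrow> (R x' z \<longleftrightarrow> R x z)"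
  and IH: "\<And>T. T \<subset> S \<Longrightarrow> chromatic_number T R \<le> clique_number T R"
  shows "chromatic_number S R \<le> clique_number S R"
proof -
  define S0 where "S0 = S - {x'}"
  define w0 where "w0 = clique_number S0 R"
  have S0S: "S0 \<subset> S" using x' unfolding S0_def by auto
  have finS0: "finite S0" using fin S0_def by auto
  have irr0: "\<forall>a\<in>S0. \<not> R a a" using irr S0_def by auto
  obtain f0 where f0': "proper_colouring S0 R f0 (chromatic_number S0 R)"
    using chi_colouring'[of S0 R, OF finS0 irr0] by blast
  have f0: "proper_colouring S0 R f0 w0"
    using colouring_mono[OF f0'] IH[OF S0S] w0_def by blast
  have w0S: "w0 \<le> clique_number S R" using clique_number_mono[OF fin] S0S w0_def by auto
  have xS0: "x \<in> S0" using x xx S0_def by auto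
  show ?thesis
  proof (cases "\<exists>K. K \<subseteq> S0 \<and> is_clique R K \<and> x \<in> K \<and> card K = w0")
    case True
    then obtain K where K: "K \<subseteq> S0" "is_clique R K" "x \<in> K" "card K = w0" by blast
    define f where "f = f0(x' := w0)"
    have "proper_colouring S R f (Suc w0)"
      unfolding proper_colouring_def
    proof safe
      fix a assume "a \<in> S" then show "f a < Suc w0"
        using f0 unfolding f_def proper_colouring_def S0_def by (cases "a = x'") (auto simp: less_SucI)
    next
      fix a b assume ab: "a \<in> S" "b \<in> S" "R a b" "f a = f b"
      show False
      proof (cases "a = x'")
        case True
        then have "b \<noteq> x'" using ab irr by auto
        then show ?thesis using ab True f0 unfolding f_def proper_colouring_def S0_def by auto
      next
        case False
        show ?thesis
        proof (cases "b = x'")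
          case True
          then show ?thesis using ab False f0 unfolding f_def proper_colouring_def S0_def by auto
        next
          case False2: False
          then show ?thesis using ab False f0 unfolding f_def proper_colouring_def S0_def by auto
        qed
      qed
    qed
    then have c1: "chromatic_number S R \<le> Suc w0" by (rule chi_le)
    have Rx'K: "\<forall>b\<in>K. R x' b"
    proof
      fix b assume b: "b \<in> K"
      show "R x' b"
      proof (cases "b = x")
        case True then show ?thesis using bspec[OF bspec[OF sym x] x'] xx by simp
      next
        case False
        then have "R x b" using K b unfolding is_clique_def by auto
        moreover have "b \<noteq> x'" "b \<in> S" using b K S0_def by auto
        ultimately show ?thesis using twin False by auto
      qed
    qed
    have cl: "is_clique R (insert x' K)"
      unfolding is_clique_def
    proof (intro ballI impI)
      fix a b assume ab: "a \<in> insert x' K" "b \<in> insert x' K" "a \<noteq> b"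
      show "R a b"
      proof (cases "a = x'")
        case True then show ?thesis using ab Rx'K by auto
      next
        case False
        then have aK: "a \<in> K" using ab by auto
        show ?thesis
        proof (cases "b = x'")
          case True
          have aS: "a \<in> S" using aK K S0_def by auto
          have "R x' a" using Rx'K aK by auto
          then show ?thesis using bspec[OF bspec[OF sym x'] aS] True by simp
        next
          case False then show ?thesis using ab aK K unfolding is_clique_def by auto
        qed
      qed
    qed
    have "x' \<notin> K" using K S0_def by auto
    moreover have "finite K" using K finS0 finite_subset by auto
    ultimately have "card (insert x' K) = Suc w0" using K by auto
    moreover have "insert x' K \<subseteq> S" using K x' S0_def by auto
    ultimately have "Suc w0 \<le> clique_number S R" using clique_le[OF fin _ cl] by metis
    then show ?thesis using c1 by linarith
  next
    case False
    define A where "A = {z\<in>S0. f0 z = f0 x \<and> z \<noteq> x}"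
    define T where "T = S0 - A"
    have TS: "T \<subset> S" using S0S T_def by auto
    have finT: "finite T" using TS fin finite_subset by auto
    have w1: "1 \<le> w0"
    proof -
      have "is_clique R {x}" unfolding is_clique_def by auto
      then show ?thesis using clique_le[OF finS0, of "{x}" R] xS0 w0_def by auto
    qed
    have wT: "clique_number T R < w0"
    proof -
      obtain K where K: "K \<subseteq> T" "is_clique R K" "card K = clique_number T R"
        using clique_max[OF finT] by blast
      have le: "clique_number T R \<le> w0" using clique_number_mono[OF finS0] T_def w0_def by auto
      have "card K \<noteq> w0"
      proof
        assume cK: "card K = w0"
        have KS0: "K \<subseteq> S0" using K T_def by auto
        have "x \<notin> K" using False KS0 K cK by blast
        have "f0 ` K = {..<w0}"
          using clique_all_colours[OF f0 KS0 K(2) cK] finS0 KS0 finite_subset by blast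
        moreover have "f0 x < w0" using f0 xS0 unfolding proper_colouring_def by auto
        ultimately obtain z where "z \<in> K" "f0 z = f0 x" by (metis imageE lessThan_iff)
        then have "z \<in> A" using KS0 \<open>x \<notin> K\<close> A_def by auto
        then show False using \<open>z \<in> K\<close> K T_def by auto
      qed
      then show ?thesis using le K by auto
    qed
    have irrT: "\<forall>a\<in>T. \<not> R a a" using irr TS by auto
    obtain g where g': "proper_colouring T R g (chromatic_number T R)"
      using chi_colouring'[of T R, OF finT irrT] by blast
    have g: "proper_colouring T R g (w0 - 1)"
      using colouring_mono[OF g'] IH[OF TS] wT by auto
    define f where "f = (\<lambda>z. if z \<in> T then g z else w0 - 1)"
    have "proper_colouring S R f w0"
      unfolding proper_colouring_def
    proof safe
      fix a assume "a \<in> S" then show "f a < w0"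
        using g w1 unfolding f_def proper_colouring_def by auto
    next
      fix a b assume ab: "a \<in> S" "b \<in> S" "R a b" "f a = f b"
      show False
      proof (cases "a \<in> T")
        case aT: True
        show ?thesis
        proof (cases "b \<in> T")
          case True then show ?thesis using ab aT g unfolding f_def proper_colouring_def by auto
        next
          case False then show ?thesis using ab aT g unfolding f_def proper_colouring_def by auto
        qed
      next
        case aT: False
        show ?thesis
        proof (cases "b \<in> T")
          case True then show ?thesis using ab aT g unfolding f_def proper_colouring_def by auto
        next
          case bT: False
          have aA: "a \<in> A \<or> a = x'" using aT ab T_def S0_def by auto
          have bA: "b \<in> A \<or> b = x'" using bT ab T_def S0_def by auto
          have noxA: "\<And>z. z \<in> A \<Longrightarrow> \<not> R x' z"
          proof
            fix z assume z: "z \<in> A" "R x' z"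
            then have "z \<noteq> x" "z \<noteq> x'" "z \<in> S" "z \<in> S0" "f0 z = f0 x" using A_def S0_def by auto
            then have "R x z" using twin z by auto
            have "f0 x \<noteq> f0 z" using f0 xS0 \<open>z \<in> S0\<close> \<open>R x z\<close> by (rule pc_edge)
            then show False using \<open>f0 z = f0 x\<close> by simp
          qed
          show ?thesis
          proof (cases "a = x'")
            case True
            then show ?thesis using bA noxA ab irr by auto
          next
            case False
            then have "a \<in> A" using aA by auto
            show ?thesis
            proof (cases "b = x'")
              case True
              have "R x' a" using bspec[OF bspec[OF sym \<open>a \<in> S\<close>] x'] True ab by simp
              then show ?thesis using \<open>a \<in> A\<close> noxA by blast
            next
              case False
              then have "b \<in> A" using bA by auto
              then have "b \<in> S0" "f0 b = f0 x" "a \<in> S0" "f0 a = f0 x" using \<open>a \<in> A\<close> unfolding A_def by auto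
              then show ?thesis using pc_edge[OF f0 \<open>a \<in> S0\<close> \<open>b \<in> S0\<close>] ab by simp
            qed
          qed
        qed
      qed
    qed
    then have "chromatic_number S R \<le> w0" by (rule chi_le)
    then show ?thesis using w0S by linarith
  qed
qed


definition Rp :: "('a \<Rightarrow> 'a \<Rightarrow> bool) \<Rightarrow> 'a \<times> nat \<Rightarrow> 'a \<times> nat \<Rightarrow> bool" where
  "Rp E p q \<longleftrightarrow> (fst p = fst q \<and> snd p \<noteq> snd q) \<or> E (fst p) (fst q)"

lemma repl_perfect:
  assumes sg: "simple_graph V E" and pf: "perfect_graph V E"
  shows "finite S \<Longrightarrow> fst ` S \<subseteq> V \<Longrightarrow> chromatic_number S (Rp E) \<le> clique_number S (Rp E)"
proof (induction "card S" arbitrary: S rule: less_induct)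
  case less
  have symV: "\<forall>a\<in>V. \<forall>b\<in>V. E a b \<longrightarrow> E b a" and irrV: "\<forall>a\<in>V. \<not> E a a"
    using sg unfolding simple_graph_def by auto
  have irr: "\<forall>a\<in>S. \<not> Rp E a a" using less.prems irrV unfolding Rp_def by auto
  have sym: "\<forall>a\<in>S. \<forall>b\<in>S. Rp E a b \<longrightarrow> Rp E b a" using less.prems symV unfolding Rp_def by auto
  show ?case
  proof (cases "inj_on fst S")
    case True
    define U where "U = fst ` S"
    have finU: "finite U" using less.prems U_def by auto
    have UV: "U \<subseteq> V" using less.prems U_def by auto
    have irrU: "\<forall>a\<in>U. \<not> E a a" using UV irrV by auto
    have eq: "chromatic_number U E = clique_number U E" using pf UV unfolding perfect_graph_def by auto
    obtain g where g: "proper_colouring U E g (chromatic_number U E)"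
      using chi_colouring'[of U E, OF finU irrU] by blast
    have "proper_colouring S (Rp E) (g \<circ> fst) (clique_number U E)"
      unfolding proper_colouring_def
    proof safe
      fix a assume "a \<in> S"
      then have "fst a \<in> U" unfolding U_def by (rule imageI)
      then show "(g \<circ> fst) a < clique_number U E"
        using pc_lt[OF g] eq by simp
    next
      fix a b assume ab: "a \<in> S" "b \<in> S" "Rp E a b" "(g \<circ> fst) a = (g \<circ> fst) b"
      show False
      proof (cases "fst a = fst b")
        case True
        have "a = b" using inj_onD[OF \<open>inj_on fst S\<close> True ab(1) ab(2)] .
        then show False using irr ab by auto
      next
        case False
        then have "E (fst a) (fst b)" using ab unfolding Rp_def by auto
        moreover have "fst a \<in> U" "fst b \<in> U" unfolding U_def using ab by auto
        ultimately show False using pc_edge[OF g, of "fst a" "fst b"] ab(4) by simp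
      qed
    qed
    then have c1: "chromatic_number S (Rp E) \<le> clique_number U E" by (rule chi_le)
    obtain K where K: "K \<subseteq> U" "is_clique E K" "card K = clique_number U E"
      using clique_max[OF finU] by blast
    define K' where "K' = {p\<in>S. fst p \<in> K}"
    have "fst ` K' = K"
    proof
      show "fst ` K' \<subseteq> K" unfolding K'_def by auto
      show "K \<subseteq> fst ` K'"
      proof
        fix u assume "u \<in> K"
        then have "u \<in> fst ` S" using K(1) U_def by auto
        then obtain p where "p \<in> S" "u = fst p" by auto
        then show "u \<in> fst ` K'" unfolding K'_def using \<open>u \<in> K\<close> by auto
      qed
    qed
    moreover have "inj_on fst K'" using True unfolding K'_def by (rule inj_on_subset) auto
    ultimately have cK: "card K' = card K" using card_image by metis
    have "is_clique (Rp E) K'"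
      unfolding is_clique_def
    proof (intro ballI impI)
      fix a b assume ab: "a \<in> K'" "b \<in> K'" "a \<noteq> b"
      have "a \<in> S" "b \<in> S" using ab K'_def by auto
      then have "fst a \<noteq> fst b" using True ab(3) unfolding inj_on_def by blast
      then show "Rp E a b" using K ab K'_def unfolding is_clique_def Rp_def by auto
    qed
    moreover have "K' \<subseteq> S" unfolding K'_def by auto
    ultimately have "card K' \<le> clique_number S (Rp E)" using clique_le[OF less.prems(1)] by blast
    then show ?thesis using c1 cK K by linarith
  next
    case False
    then obtain p q where pq: "p \<in> S" "q \<in> S" "fst p = fst q" "p \<noteq> q" unfolding inj_on_def by blast
    show ?thesis
    proof (rule replication[OF less.prems(1) sym irr pq(1) pq(2) pq(4)])
      show "Rp E p q" using pq unfolding Rp_def by (auto simp: prod_eq_iff)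
      show "\<forall>z\<in>S. z \<noteq> p \<longrightarrow> z \<noteq> q \<longrightarrow> (Rp E q z \<longleftrightarrow> Rp E p z)"
        using pq unfolding Rp_def by (auto simp: prod_eq_iff)
    next
      fix T assume T: "T \<subset> S"
      then have "card T < card S" using less.prems(1) by (simp add: psubset_card_mono)
      moreover have "finite T" using T less.prems(1) finite_subset by auto
      moreover have "fst ` T \<subseteq> V" using T less.prems(2) by auto
      ultimately show "chromatic_number T (Rp E) \<le> clique_number T (Rp E)" by (rule less.hyps)
    qed
  qed
qed


lemma clique_at_ge:
  assumes "finite V" "K \<subseteq> V" "is_clique E K" "v \<in> K"
  shows "card K \<le> max_clique_at V E v"
proof -
  have "{card K | K. K \<subseteq> V \<and> is_clique E K \<and> v \<in> K} \<subseteq> card ` Pow V" by auto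
  then have fin: "finite {card K | K. K \<subseteq> V \<and> is_clique E K \<and> v \<in> K}"
    using assms(1) finite_subset by blast
  have "card K \<in> {card K | K. K \<subseteq> V \<and> is_clique E K \<and> v \<in> K}" using assms by blast
  then show ?thesis unfolding max_clique_at_def using fin by (rule Max_ge[rotated])
qed

lemma indep_at_ge:
  assumes "finite V" "I \<subseteq> V" "is_indep E I" "v \<in> I"
  shows "card I \<le> max_indep_at V E v"
proof -
  have "{card K | K. K \<subseteq> V \<and> is_indep E K \<and> v \<in> K} \<subseteq> card ` Pow V" by auto
  then have fin: "finite {card K | K. K \<subseteq> V \<and> is_indep E K \<and> v \<in> K}"
    using assms(1) finite_subset by blast
  have "card I \<in> {card K | K. K \<subseteq> V \<and> is_indep E K \<and> v \<in> K}" using assms by blast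
  then show ?thesis unfolding max_indep_at_def using fin by (rule Max_ge[rotated])
qed

lemma clique_at_pos:
  assumes "finite V" "v \<in> V"
  shows "1 \<le> max_clique_at V E v"
proof -
  have "is_clique E {v}" unfolding is_clique_def by auto
  then show ?thesis using clique_at_ge[OF assms(1), of "{v}" E v] assms(2) by simp
qed

lemma indep_at_pos:
  assumes "finite V" "v \<in> V" "\<not> E v v"
  shows "1 \<le> max_indep_at V E v"
proof -
  have "is_indep E {v}" unfolding is_indep_def using assms(3) by auto
  then show ?thesis using indep_at_ge[OF assms(1), of "{v}" E v] assms(2) by simp
qed

theorem theorem9:
  fixes V :: "'a set" and E :: "'a \<Rightarrow> 'a \<Rightarrow> bool"
  assumes "finite V" and "simple_graph V E" and "perfect_graph V E"
  shows "(\<Sum>v\<in>V. 1 / (real (max_clique_at V E v) * real (max_indep_at V E v))) \<le> 1"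
proof -
  define c where "c = max_clique_at V E"
  define ii where "ii = max_indep_at V E"
  have irrV: "\<forall>a\<in>V. \<not> E a a" using assms(2) unfolding simple_graph_def by auto
  have c1: "\<And>v. v \<in> V \<Longrightarrow> 1 \<le> c v" unfolding c_def using clique_at_pos[OF assms(1)] by blast
  have i1: "\<And>v. v \<in> V \<Longrightarrow> 1 \<le> ii v" unfolding ii_def using indep_at_pos[OF assms(1)] irrV by blast
  define N where "N = (\<Prod>v\<in>V. c v)"
  have Npos: "0 < N" unfolding N_def proof (rule prod_pos)
    show "\<And>v. v \<in> V \<Longrightarrow> 0 < c v" using c1 by fastforce
  qed
  define w where "w v = N div c v" for v
  have wr: "real (w v) = real N / real (c v)" if "v \<in> V" for v
  proof -
    have "c v dvd N" unfolding N_def using assms(1) that by (intro dvd_prod_eqI) auto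
    then show ?thesis unfolding w_def by (rule real_of_nat_div)
  qed
  define Vw where "Vw = (SIGMA v:V. {..<w v})"
  have finVw: "finite Vw" unfolding Vw_def using assms(1) by auto
  have fstVw: "fst ` Vw \<subseteq> V" unfolding Vw_def by auto
  have irrVw: "\<forall>a\<in>Vw. \<not> Rp E a a" using fstVw irrV unfolding Rp_def by auto
  have chi: "chromatic_number Vw (Rp E) \<le> clique_number Vw (Rp E)"
    using repl_perfect[OF assms(2,3) finVw fstVw] .
  have om: "clique_number Vw (Rp E) \<le> N"
  proof -
    obtain K where K: "K \<subseteq> Vw" "is_clique (Rp E) K" "card K = clique_number Vw (Rp E)"
      using clique_max[OF finVw] by blast
    define U where "U = fst ` K"
    have UV: "U \<subseteq> V" using K(1) fstVw U_def by auto
    have finU: "finite U" using UV assms(1) finite_subset by auto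
    have Ucl: "is_clique E U"
      unfolding is_clique_def
    proof (intro ballI impI)
      fix a b assume ab: "a \<in> U" "b \<in> U" "a \<noteq> b"
      then obtain p q where "p \<in> K" "q \<in> K" "a = fst p" "b = fst q" unfolding U_def by blast
      then have "Rp E p q" using K(2) ab(3) unfolding is_clique_def by auto
      then show "E a b" using ab(3) \<open>a = fst p\<close> \<open>b = fst q\<close> unfolding Rp_def by auto
    qed
    have "K \<subseteq> (SIGMA u:U. {..<w u})"
    proof
      fix p assume "p \<in> K"
      then have "p \<in> Vw" "fst p \<in> U" using K(1) U_def by auto
      then show "p \<in> (SIGMA u:U. {..<w u})" unfolding Vw_def by (cases p) auto
    qed
    then have "card K \<le> card (SIGMA u:U. {..<w u})" using finU by (intro card_mono) auto
    also have "\<dots> = (\<Sum>u\<in>U. w u)" using finU by simp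
    finally have cK: "card K \<le> (\<Sum>u\<in>U. w u)" .
    show ?thesis
    proof (cases "U = {}")
      case True
      then have "K = {}" unfolding U_def by auto
      then show ?thesis using K(3) by simp
    next
      case False
      then have cU: "0 < card U" using finU by auto
      have "real (\<Sum>u\<in>U. w u) = (\<Sum>u\<in>U. real N / real (c u))" using wr UV by (auto intro: sum.cong)
      also have "\<dots> \<le> (\<Sum>u\<in>U. real N / real (card U))"
      proof (rule sum_mono)
        fix u assume "u \<in> U"
        then have "card U \<le> c u" unfolding c_def using clique_at_ge[OF assms(1) UV Ucl] by blast
        then show "real N / real (c u) \<le> real N / real (card U)"
          using cU by (intro divide_left_mono) auto
      qed
      also have "\<dots> = real N" using cU by simp
      finally have "(\<Sum>u\<in>U. w u) \<le> N" by linarith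
      then show ?thesis using cK K(3) by linarith
    qed
  qed
  obtain f where f': "proper_colouring Vw (Rp E) f (chromatic_number Vw (Rp E))"
    using chi_colouring'[of Vw "Rp E", OF finVw irrVw] by blast
  have f: "proper_colouring Vw (Rp E) f N" using chi om by (intro colouring_mono[OF f']) linarith
  define h where "h v = 1 / real (ii v)" for v
  have block: "(\<Sum>p\<in>{p. p \<in> Vw \<and> f p = j}. h (fst p)) \<le> 1" for j
  proof -
    define P where "P = {p. p \<in> Vw \<and> f p = j}"
    have finP: "finite P" using finVw P_def by auto
    have inj: "inj_on fst P"
    proof (rule inj_onI)
      fix p q assume pq: "p \<in> P" "q \<in> P" "fst p = fst q"
      show "p = q"
      proof (rule ccontr)
        assume "p \<noteq> q"
        then have "snd p \<noteq> snd q" using pq(3) by (simp add: prod_eq_iff)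
        then have "Rp E p q" using pq(3) unfolding Rp_def by simp
        moreover have "p \<in> Vw" "q \<in> Vw" using pq(1,2) P_def by auto
        ultimately have "f p \<noteq> f q" using pc_edge[OF f] by blast
        then show False using pq(1,2) P_def by auto
      qed
    qed
    have PV: "fst ` P \<subseteq> V" using fstVw P_def by auto
    have ind: "is_indep E (fst ` P)"
      unfolding is_indep_def
    proof (intro ballI notI)
      fix a b assume ab: "a \<in> fst ` P" "b \<in> fst ` P" "E a b"
      then obtain p q where pq: "p \<in> P" "q \<in> P" "a = fst p" "b = fst q" by blast
      show False
      proof (cases "a = b")
        case True then show False using ab PV irrV by auto
      next
        case False
        then have "Rp E p q" using ab(3) pq unfolding Rp_def by simp
        moreover have "p \<in> Vw" "q \<in> Vw" using pq(1,2) P_def by auto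
        ultimately have "f p \<noteq> f q" using pc_edge[OF f] by blast
        then show False using pq(1,2) P_def by auto
      qed
    qed
    have cardP: "card (fst ` P) = card P" using inj by (rule card_image)
    have "(\<Sum>p\<in>P. h (fst p)) \<le> (\<Sum>p\<in>P. 1 / real (card P))"
    proof (rule sum_mono)
      fix p assume p: "p \<in> P"
      then have "fst p \<in> fst ` P" by auto
      then have "card (fst ` P) \<le> ii (fst p)" unfolding ii_def using indep_at_ge[OF assms(1) PV ind] by blast
      then have le: "card P \<le> ii (fst p)" using cardP by simp
      have "0 < card P" using p finP card_gt_0_iff by blast
      then show "h (fst p) \<le> 1 / real (card P)" unfolding h_def using le
        by (intro divide_left_mono) auto
    qed
    also have "\<dots> \<le> 1" by (cases "card P = 0") auto
    finally show ?thesis unfolding P_def .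
  qed
  have "(\<Sum>p\<in>Vw. h (fst p)) = (\<Sum>j\<in>{..<N}. \<Sum>p\<in>{p. p \<in> Vw \<and> f p = j}. h (fst p))"
  proof (rule sum.group[symmetric])
    show "finite Vw" by (rule finVw)
    show "finite {..<N}" by simp
    show "f ` Vw \<subseteq> {..<N}" using pc_lt[OF f] by auto
  qed
  also have "\<dots> \<le> (\<Sum>j\<in>{..<N}. 1)" by (rule sum_mono) (rule block)
  also have "\<dots> = real N" by simp
  finally have tot: "(\<Sum>p\<in>Vw. h (fst p)) \<le> real N" .
  have "(\<Sum>p\<in>Vw. h (fst p)) = (\<Sum>v\<in>V. \<Sum>i\<in>{..<w v}. h v)"
    unfolding Vw_def using assms(1) by (subst sum.Sigma) (auto simp: case_prod_beta)
  also have "\<dots> = (\<Sum>v\<in>V. real (w v) * h v)" by simp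
  also have "\<dots> = (\<Sum>v\<in>V. real N * (1 / (real (c v) * real (ii v))))"
    using wr by (intro sum.cong) (auto simp: h_def)
  also have "\<dots> = real N * (\<Sum>v\<in>V. 1 / (real (c v) * real (ii v)))" by (simp add: sum_distrib_left)
  finally have "real N * (\<Sum>v\<in>V. 1 / (real (c v) * real (ii v))) \<le> real N * 1" using tot by simp
  then have "(\<Sum>v\<in>V. 1 / (real (c v) * real (ii v))) \<le> 1" using Npos by simp
  then show ?thesis unfolding c_def ii_def .
qed

end
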